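(* For any $k\in\mathbb{N}$, there exists a simple connected graph $G$ with at least one edge such that $src(G)-\max(\mathrm{diam}(G),\omega'(G))\geq k$.
   Context: An edge coloring of $G$ is any function $f:E(G)\to\{1,\dots,k\}$ (adjacent edges may share a color). A path is rainbow if its edges receive pairwise distinct colors. $src(G)$ is the minimum number of colors in an edge coloring such that every pair of distinct vertices is joined by a rainbow shortest path. For distinct $u_1,u_2\in V(G)$, an edge $e$ separates $u_1,u_2$ if $e$ lies on every shortest $(u_1,u_2)$-path. The auxiliary graph $H(G)$ has vertex set $E(G)$, with distinct $e_1,e_2$ adjacent iff some pair of distinct vertices is separated by both. $\omega'(G)$ is the clique number of $H(G)$; $\mathrm{diam}(G)$ is the diameter of $G$. *)

theory Defs
  imports Main
begin

definition simple_graph :: "'a set \<Rightarrow> 'a set set \<Rightarrow> bool" where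
  "simple_graph V E \<longleftrightarrow> finite V \<and>
     (\<forall>e\<in>E. \<exists>u v. u \<in> V \<and> v \<in> V \<and> u \<noteq> v \<and> e = {u, v})"

definition is_path :: "'a set \<Rightarrow> 'a set set \<Rightarrow> 'a list \<Rightarrow> bool" where
  "is_path V E P \<longleftrightarrow> P \<noteq> [] \<and> set P \<subseteq> V \<and> distinct P \<and>
     (\<forall>i. Suc i < length P \<longrightarrow> {P ! i, P ! Suc i} \<in> E)"

definition path_edges :: "'a list \<Rightarrow> 'a set list" where
  "path_edges P = map (\<lambda>i. {P ! i, P ! Suc i}) [0..<length P - 1]"

definition is_uv_path :: "'a set \<Rightarrow> 'a set set \<Rightarrow> 'a \<Rightarrow> 'a \<Rightarrow> 'a list \<Rightarrow> bool" where
  "is_uv_path V E u v P \<longleftrightarrow> is_path V E P \<and> hd P = u \<and> last P = v"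

definition connected_graph :: "'a set \<Rightarrow> 'a set set \<Rightarrow> bool" where
  "connected_graph V E \<longleftrightarrow> (\<forall>u\<in>V. \<forall>v\<in>V. \<exists>P. is_uv_path V E u v P)"

definition dist :: "'a set \<Rightarrow> 'a set set \<Rightarrow> 'a \<Rightarrow> 'a \<Rightarrow> nat" where
  "dist V E u v = (LEAST n. \<exists>P. is_uv_path V E u v P \<and> length P = Suc n)"

definition is_shortest_path :: "'a set \<Rightarrow> 'a set set \<Rightarrow> 'a \<Rightarrow> 'a \<Rightarrow> 'a list \<Rightarrow> bool" where
  "is_shortest_path V E u v P \<longleftrightarrow> is_uv_path V E u v P \<and>
     (\<forall>Q. is_uv_path V E u v Q \<longrightarrow> length P \<le> length Q)"

definition diam :: "'a set \<Rightarrow> 'a set set \<Rightarrow> nat" where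
  "diam V E = Max {dist V E u v | u v. u \<in> V \<and> v \<in> V}"

definition rainbow :: "('a set \<Rightarrow> nat) \<Rightarrow> 'a list \<Rightarrow> bool" where
  "rainbow f P \<longleftrightarrow> distinct (map f (path_edges P))"

definition strong_rainbow_coloring :: "'a set \<Rightarrow> 'a set set \<Rightarrow> nat \<Rightarrow> ('a set \<Rightarrow> nat) \<Rightarrow> bool" where
  "strong_rainbow_coloring V E k f \<longleftrightarrow> (\<forall>e\<in>E. f e \<in> {1..k}) \<and>
     (\<forall>u\<in>V. \<forall>v\<in>V. u \<noteq> v \<longrightarrow> (\<exists>P. is_shortest_path V E u v P \<and> rainbow f P))"

definition src :: "'a set \<Rightarrow> 'a set set \<Rightarrow> nat" where
  "src V E = (LEAST k. \<exists>f. strong_rainbow_coloring V E k f)"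

definition separates :: "'a set \<Rightarrow> 'a set set \<Rightarrow> 'a set \<Rightarrow> 'a \<Rightarrow> 'a \<Rightarrow> bool" where
  "separates V E e u v \<longleftrightarrow>
     (\<forall>P. is_shortest_path V E u v P \<longrightarrow> e \<in> set (path_edges P))"

definition H_adj :: "'a set \<Rightarrow> 'a set set \<Rightarrow> 'a set \<Rightarrow> 'a set \<Rightarrow> bool" where
  "H_adj V E e1 e2 \<longleftrightarrow> e1 \<in> E \<and> e2 \<in> E \<and> e1 \<noteq> e2 \<and>
     (\<exists>u\<in>V. \<exists>v\<in>V. u \<noteq> v \<and> separates V E e1 u v \<and> separates V E e2 u v)"

definition H_clique :: "'a set \<Rightarrow> 'a set set \<Rightarrow> 'a set set \<Rightarrow> bool" where
  "H_clique V E C \<longleftrightarrow> C \<subseteq> E \<and> (\<forall>e1\<in>C. \<forall>e2\<in>C. e1 \<noteq> e2 \<longrightarrow> H_adj V E e1 e2)"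

definition omega' :: "'a set \<Rightarrow> 'a set set \<Rightarrow> nat" where
  "omega' V E = Max {card C | C. H_clique V E C}"

end

theory Submission
  imports Defs
begin


lemma path_len1: "is_uv_path V E u v P \<Longrightarrow> length P = 1 \<Longrightarrow> u = v"
  by (cases P) (auto simp: is_uv_path_def)

lemma path_len2:
  assumes a: "is_uv_path V E u v P" "length P = 2"
  shows "P = [u,v] \<and> {u,v} \<in> E \<and> u \<noteq> v"
proof -
  obtain x y where P: "P = [x,y]" using a(2) by (auto simp: numeral_2_eq_2 length_Suc_conv)
  have "{P!0, P!Suc 0} \<in> E" using a unfolding is_uv_path_def is_path_def by simp
  moreover have "distinct P" "hd P = u" "last P = v" using a unfolding is_uv_path_def is_path_def by simp_all
  ultimately show ?thesis using P by simp
qed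

lemma path_len3:
  assumes a: "is_uv_path V E u v P" "length P = 3"
  shows "\<exists>w. P = [u,w,v] \<and> {u,w} \<in> E \<and> {w,v} \<in> E"
proof -
  obtain x y z where P: "P = [x,y,z]" using a(2) by (auto simp: numeral_3_eq_3 length_Suc_conv)
  have "{P!0, P!Suc 0} \<in> E" "{P!1, P!Suc 1} \<in> E" using a unfolding is_uv_path_def is_path_def by simp_all
  moreover have "hd P = u" "last P = v" using a unfolding is_uv_path_def is_path_def by simp_all
  ultimately show ?thesis using P by simp
qed

lemma len_ge2:
  assumes a: "is_uv_path V E u v P" "u \<noteq> v" shows "length P \<ge> 2"
proof (rule ccontr)
  assume b: "\<not> length P \<ge> 2"
  have "P \<noteq> []" using a by (simp add: is_uv_path_def is_path_def)
  then have "length P > 0" by simp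
  then have "length P = 1" using b by linarith
  thus False using path_len1 a by metis
qed

lemma len_ge3:
  assumes a: "is_uv_path V E u v P" "u \<noteq> v" "{u,v} \<notin> E" shows "length P \<ge> 3"
proof (rule ccontr)
  assume b: "\<not> length P \<ge> 3"
  have "length P \<ge> 2" using len_ge2[OF a(1,2)] .
  then have "length P = 2" using b by linarith
  thus False using path_len2 a by metis
qed

lemma mk_path1: "u \<in> V \<Longrightarrow> is_uv_path V E u u [u]"
  by (simp add: is_uv_path_def is_path_def)

lemma mk_path2: assumes "u \<in> V" "v \<in> V" "u \<noteq> v" "{u,v} \<in> E" shows "is_uv_path V E u v [u,v]"
proof -
  have "\<forall>i. Suc i < length [u,v] \<longrightarrow> {[u,v]!i, [u,v]!Suc i} \<in> E"
  proof (intro allI impI)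
    fix i assume "Suc i < length [u,v]"
    hence "i = 0" by simp
    thus "{[u,v]!i, [u,v]!Suc i} \<in> E" using assms by simp
  qed
  thus ?thesis using assms by (simp add: is_uv_path_def is_path_def)
qed

lemma mk_path3: assumes "u \<in> V" "w \<in> V" "v \<in> V" "u \<noteq> v" "u \<noteq> w" "w \<noteq> v"
   "{u,w} \<in> E" "{w,v} \<in> E" shows "is_uv_path V E u v [u,w,v]"
proof -
  have "\<forall>i. Suc i < length [u,w,v] \<longrightarrow> {[u,w,v]!i, [u,w,v]!Suc i} \<in> E"
  proof (intro allI impI)
    fix i assume "Suc i < length [u,w,v]"
    hence "i = 0 \<or> i = 1" by auto
    thus "{[u,w,v]!i, [u,w,v]!Suc i} \<in> E" using assms by auto
  qed
  thus ?thesis using assms by (simp add: is_uv_path_def is_path_def)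
qed

lemma pe2: "path_edges [u,v] = [{u,v}]" by (simp add: path_edges_def)
lemma pe3: "path_edges [u,w,v] = [{u,w},{w,v}]" by (simp add: path_edges_def upt_rec)

lemma dist_le: assumes "is_uv_path V E u v P" shows "dist V E u v \<le> length P - 1"
proof -
  have "P \<noteq> []" using assms by (simp add: is_uv_path_def is_path_def)
  hence "length P = Suc (length P - 1)" by simp
  hence "\<exists>Q. is_uv_path V E u v Q \<and> length Q = Suc (length P - 1)" using assms by blast
  thus ?thesis unfolding dist_def by (rule Least_le)
qed

lemma shortest2: assumes "u \<in> V" "v \<in> V" "u \<noteq> v" "{u,v} \<in> E"
  shows "is_shortest_path V E u v [u,v]"
proof -
  have "is_uv_path V E u v [u,v]" using assms by (rule mk_path2)
  moreover have "\<forall>Q. is_uv_path V E u v Q \<longrightarrow> length [u,v] \<le> length Q"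
  proof (intro allI impI)
    fix Q assume "is_uv_path V E u v Q"
    from len_ge2[OF this assms(3)] show "length [u,v] \<le> length Q" by simp
  qed
  ultimately show ?thesis by (simp add: is_shortest_path_def)
qed

lemma uv_in_V: assumes p: "is_uv_path V E u v P" shows "u \<in> V" "v \<in> V"
proof -
  have "P \<noteq> []" "set P \<subseteq> V" "hd P = u" "last P = v" using p by (simp_all add: is_uv_path_def is_path_def)
  thus "u \<in> V" "v \<in> V" using hd_in_set last_in_set by blast+
qed

lemma shortest2_form:
  assumes a: "u \<noteq> v" "{u,v} \<in> E" "is_shortest_path V E u v P" shows "P = [u,v]"
proof -
  have p: "is_uv_path V E u v P" using a(3) by (simp add: is_shortest_path_def)
  have "u \<in> V" "v \<in> V" using uv_in_V[OF p] by simp_all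
  then have "is_uv_path V E u v [u,v]" using a(1,2) by (intro mk_path2)
  then have "length P \<le> length [u,v]" using a(3) unfolding is_shortest_path_def by blast
  then have "length P \<le> 2" by simp
  moreover have "length P \<ge> 2" using len_ge2[OF p a(1)] .
  ultimately have "length P = 2" by simp
  from path_len2[OF p this] show ?thesis by simp
qed

lemma shortest3: assumes "u \<in> V" "w \<in> V" "v \<in> V" "u \<noteq> v" "u \<noteq> w" "w \<noteq> v"
   "{u,w} \<in> E" "{w,v} \<in> E" "{u,v} \<notin> E" shows "is_shortest_path V E u v [u,w,v]"
proof -
  have "is_uv_path V E u v [u,w,v]" using assms by (intro mk_path3)
  moreover have "\<forall>Q. is_uv_path V E u v Q \<longrightarrow> length [u,w,v] \<le> length Q"
  proof (intro allI impI)
    fix Q assume "is_uv_path V E u v Q"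
    from len_ge3[OF this assms(4,9)] show "length [u,w,v] \<le> length Q" by simp
  qed
  ultimately show ?thesis by (simp add: is_shortest_path_def)
qed

lemma not_sep: "u \<in> V \<Longrightarrow> v \<in> V \<Longrightarrow> w1 \<in> V \<Longrightarrow> w2 \<in> V \<Longrightarrow> u \<noteq> v \<Longrightarrow> w1 \<noteq> w2 \<Longrightarrow>
   w1 \<notin> {u,v} \<Longrightarrow> w2 \<notin> {u,v} \<Longrightarrow> {u,w1} \<in> E \<Longrightarrow> {w1,v} \<in> E \<Longrightarrow> {u,w2} \<in> E \<Longrightarrow> {w2,v} \<in> E
   \<Longrightarrow> {u,v} \<notin> E \<Longrightarrow> \<not> separates V E e u v"
proof
  assume a: "u \<in> V" "v \<in> V" "w1 \<in> V" "w2 \<in> V" "u \<noteq> v" "w1 \<noteq> w2"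
   "w1 \<notin> {u,v}" "w2 \<notin> {u,v}" "{u,w1} \<in> E" "{w1,v} \<in> E" "{u,w2} \<in> E" "{w2,v} \<in> E"
   "{u,v} \<notin> E" "separates V E e u v"
  have d: "u \<noteq> w1" "u \<noteq> w2" "v \<noteq> w1" "v \<noteq> w2" "u \<noteq> v" "w1 \<noteq> w2" using a(5-8) by auto
  have "is_shortest_path V E u v [u,w1,v]" using a d by (intro shortest3) auto
  then have "e \<in> set (path_edges [u,w1,v])" using a(14) by (simp add: separates_def)
  hence e1: "e = {u,w1} \<or> e = {w1,v}" by (simp add: pe3)
  have "is_shortest_path V E u v [u,w2,v]" using a d by (intro shortest3) auto
  then have "e \<in> set (path_edges [u,w2,v])" using a(14) by (simp add: separates_def)
  hence e2: "e = {u,w2} \<or> e = {w2,v}" by (simp add: pe3)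
  show False using e1 d(6) e2 d(1-5) by (elim disjE) (simp_all add: doubleton_eq_iff)
qed



definition V2 :: "nat \<Rightarrow> nat set" where "V2 n = {0..<n+2}"
definition E2 :: "nat \<Rightarrow> nat set set" where
  "E2 n = {{i,j} | i j. i < 2 \<and> 2 \<le> j \<and> j < n+2}"

lemma E2_mem: "{u,v} \<in> E2 n \<longleftrightarrow> (u<2 \<and> 2\<le>v \<and> v<n+2) \<or> (v<2 \<and> 2\<le>u \<and> u<n+2)"
  unfolding E2_def by (auto simp: doubleton_eq_iff)

lemma V2_mem: "x \<in> V2 n \<longleftrightarrow> x < n+2" by (auto simp: V2_def)

lemma simple2: "simple_graph (V2 n) (E2 n)"
  unfolding simple_graph_def
proof
  show "finite (V2 n)" by (simp add: V2_def)
  show "\<forall>e\<in>E2 n. \<exists>u v. u \<in> V2 n \<and> v \<in> V2 n \<and> u \<noteq> v \<and> e = {u, v}"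
  proof
    fix e assume "e \<in> E2 n"
    then obtain i j where "e = {i,j}" "i < 2" "2 \<le> j" "j < n+2" by (auto simp: E2_def)
    thus "\<exists>u v. u \<in> V2 n \<and> v \<in> V2 n \<and> u \<noteq> v \<and> e = {u, v}"
      by (intro exI[of _ i] exI[of _ j]) (simp add: V2_mem)
  qed
qed

lemma E2_ne: assumes "n \<ge> 2" shows "E2 n \<noteq> {}"
proof -
  have "{0,2} \<in> E2 n" using assms by (simp add: E2_mem)
  thus ?thesis by blast
qed

lemma E2_fin: "finite (E2 n)"
proof -
  have "E2 n \<subseteq> Pow (V2 n)" by (auto simp: E2_def V2_def)
  thus ?thesis by (rule finite_subset) (simp add: V2_def)
qed

lemma common_nbr:
  assumes a: "n \<ge> 2" "u \<in> V2 n" "v \<in> V2 n" "u \<noteq> v" "{u,v} \<notin> E2 n"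
  shows "\<exists>w1 w2. w1 \<in> V2 n \<and> w2 \<in> V2 n \<and> w1 \<noteq> w2 \<and> w1 \<notin> {u,v} \<and> w2 \<notin> {u,v} \<and>
   {u,w1} \<in> E2 n \<and> {w1,v} \<in> E2 n \<and> {u,w2} \<in> E2 n \<and> {w2,v} \<in> E2 n"
proof (cases "u < 2")
  case True
  then have "v < 2" using a by (auto simp: E2_mem V2_mem)
  then show ?thesis using True a
    by (intro exI[of _ 2] exI[of _ 3]) (auto simp: E2_mem V2_mem)
next
  case False
  then have "\<not> v < 2" using a by (auto simp: E2_mem V2_mem)
  then show ?thesis using False a
    by (intro exI[of _ 0] exI[of _ 1]) (auto simp: E2_mem V2_mem)
qed

lemma shortest_exists:
  assumes a: "n \<ge> 2" "u \<in> V2 n" "v \<in> V2 n" "u \<noteq> v"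
  shows "\<exists>P. is_shortest_path (V2 n) (E2 n) u v P \<and> (P = [u,v] \<or> (\<exists>w. w \<noteq> u \<and> w \<noteq> v \<and> P = [u,w,v]))"
proof (cases "{u,v} \<in> E2 n")
  case True
  then show ?thesis using a shortest2[of u "V2 n" v "E2 n"] by blast
next
  case False
  then obtain w where w: "w \<in> V2 n" "w \<notin> {u,v}" "{u,w} \<in> E2 n" "{w,v} \<in> E2 n"
    using common_nbr[OF a False] by blast
  then have "is_shortest_path (V2 n) (E2 n) u v [u,w,v]"
    using a False by (intro shortest3) auto
  then show ?thesis using w(2) by blast
qed

lemma connected2: assumes n: "n \<ge> 2" shows "connected_graph (V2 n) (E2 n)"
  unfolding connected_graph_def
proof (intro ballI)
  fix u v assume uv: "u \<in> V2 n" "v \<in> V2 n"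
  show "\<exists>P. is_uv_path (V2 n) (E2 n) u v P"
  proof (cases "u = v")
    case True thus ?thesis using mk_path1[OF uv(1)] by blast
  next
    case False thus ?thesis using shortest_exists[OF n uv False] unfolding is_shortest_path_def by blast
  qed
qed

lemma dist2: assumes n: "n \<ge> 2" and uv: "u \<in> V2 n" "v \<in> V2 n"
  shows "dist (V2 n) (E2 n) u v \<le> 2"
proof (cases "u = v")
  case True
  thus ?thesis using dist_le[OF mk_path1[OF uv(1)], of "E2 n"] by simp
next
  case False
  then obtain P where P: "is_shortest_path (V2 n) (E2 n) u v P" "P = [u,v] \<or> (\<exists>w. w \<noteq> u \<and> w \<noteq> v \<and> P = [u,w,v])"
    using shortest_exists[OF n uv False] by blast
  have "dist (V2 n) (E2 n) u v \<le> length P - 1" 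
    using dist_le P(1) unfolding is_shortest_path_def by (elim conjE) (rule dist_le)
  moreover have "length P \<le> 3" using P(2) by auto
  ultimately show ?thesis by linarith
qed

lemma diam2: assumes n: "n \<ge> 2" shows "diam (V2 n) (E2 n) \<le> 2"
proof -
  let ?S = "{dist (V2 n) (E2 n) u v | u v. u \<in> V2 n \<and> v \<in> V2 n}"
  have "?S = (\<lambda>(u,v). dist (V2 n) (E2 n) u v) ` (V2 n \<times> V2 n)" by auto
  hence fin: "finite ?S" by (simp add: V2_def)
  have "0 \<in> V2 n" by (simp add: V2_mem)
  hence ne: "?S \<noteq> {}" by blast
  have "\<forall>x\<in>?S. x \<le> 2" using dist2[OF n] by blast
  thus ?thesis unfolding diam_def using fin ne by (simp add: Max_le_iff)
qed

lemma sep_unique: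
  assumes a: "n \<ge> 2" "u \<in> V2 n" "v \<in> V2 n" "u \<noteq> v" "separates (V2 n) (E2 n) e u v"
  shows "e = {u,v}"
proof (cases "{u,v} \<in> E2 n")
  case True
  have "is_shortest_path (V2 n) (E2 n) u v [u,v]" using a True by (intro shortest2)
  then have "e \<in> set (path_edges [u,v])" using a(5) by (simp add: separates_def)
  thus ?thesis by (simp add: pe2)
next
  case False
  then obtain w1 w2 where w: "w1 \<in> V2 n" "w2 \<in> V2 n" "w1 \<noteq> w2" "w1 \<notin> {u,v}" "w2 \<notin> {u,v}"
   "{u,w1} \<in> E2 n" "{w1,v} \<in> E2 n" "{u,w2} \<in> E2 n" "{w2,v} \<in> E2 n"
    using common_nbr[OF a(1-4) False] by blast
  have "\<not> separates (V2 n) (E2 n) e u v"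
    by (rule not_sep[OF a(2,3) w(1,2) a(4) w(3-9) False])
  thus ?thesis using a(5) by blast
qed

lemma omega2: assumes n: "n \<ge> 2" shows "omega' (V2 n) (E2 n) \<le> 1"
proof -
  have c1: "card C \<le> 1" if "H_clique (V2 n) (E2 n) C" for C
  proof -
    have "C \<subseteq> E2 n" using that by (simp add: H_clique_def)
    hence "finite C" using E2_fin finite_subset by blast
    moreover have "\<forall>x\<in>C. \<forall>y\<in>C. x = y"
    proof (intro ballI, rule ccontr)
      fix x y assume "x \<in> C" "y \<in> C" "x \<noteq> y"
      then have "H_adj (V2 n) (E2 n) x y" using that by (simp add: H_clique_def)
      then obtain u v where "u \<in> V2 n" "v \<in> V2 n" "u \<noteq> v" "separates (V2 n) (E2 n) x u v"
        "separates (V2 n) (E2 n) y u v" by (auto simp: H_adj_def)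
      then have "x = {u,v}" "y = {u,v}" using sep_unique[OF n] by blast+
      then show False using \<open>x \<noteq> y\<close> by simp
    qed
    ultimately show ?thesis using card_le_Suc0_iff_eq by (metis One_nat_def)
  qed
  let ?S = "{card C | C. H_clique (V2 n) (E2 n) C}"
  have "?S \<subseteq> card ` Pow (E2 n)" by (auto simp: H_clique_def)
  hence finC: "finite ?S" using E2_fin finite_subset by blast
  have "H_clique (V2 n) (E2 n) {}" by (simp add: H_clique_def)
  hence ne: "?S \<noteq> {}" by blast
  have "\<forall>x\<in>?S. x \<le> 1" using c1 by blast
  thus ?thesis unfolding omega'_def using finC ne by (simp add: Max_le_iff)
qed



lemma coloring_exists: assumes n: "n \<ge> 2"
  shows "\<exists>K f. strong_rainbow_coloring (V2 n) (E2 n) K f"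
proof -
  obtain h where h: "bij_betw h (E2 n) {0..<card (E2 n)}" using ex_bij_betw_finite_nat[OF E2_fin] by blast
  define f where "f = (\<lambda>e. h e + 1)"
  have inj: "inj_on f (E2 n)" using h unfolding f_def bij_betw_def inj_on_def by simp
  have col: "\<forall>e\<in>E2 n. f e \<in> {1..card (E2 n)}"
  proof
    fix e assume "e \<in> E2 n"
    then have "h e < card (E2 n)" using h unfolding bij_betw_def by auto
    thus "f e \<in> {1..card (E2 n)}" by (simp add: f_def)
  qed
  have rb: "\<exists>P. is_shortest_path (V2 n) (E2 n) u v P \<and> rainbow f P"
    if uv: "u \<in> V2 n" "v \<in> V2 n" "u \<noteq> v" for u v
  proof -
    obtain P where P: "is_shortest_path (V2 n) (E2 n) u v P"
       "P = [u,v] \<or> (\<exists>w. w \<noteq> u \<and> w \<noteq> v \<and> P = [u,w,v])"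
      using shortest_exists[OF n uv] by blast
    have "rainbow f P"
    proof (cases "P = [u,v]")
      case True thus ?thesis by (simp add: rainbow_def pe2)
    next
      case False
      then obtain w where w: "P = [u,w,v]" using P(2) by blast
      have ip: "is_path (V2 n) (E2 n) P" using P(1) by (simp add: is_shortest_path_def is_uv_path_def)
      have all: "\<forall>i. Suc i < length P \<longrightarrow> {P ! i, P ! Suc i} \<in> E2 n" using ip unfolding is_path_def by blast
      have e: "{u,w} \<in> E2 n" "{w,v} \<in> E2 n" using spec[OF all, of 0] spec[OF all, of 1] w by simp_all
      have "{u,w} \<noteq> {w,v}" using uv(3) by (auto simp: doubleton_eq_iff)
      hence "f {u,w} \<noteq> f {w,v}" using inj e inj_on_def by metis
      thus ?thesis using w by (simp add: rainbow_def pe3)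
    qed
    thus ?thesis using P(1) by blast
  qed
  have "strong_rainbow_coloring (V2 n) (E2 n) (card (E2 n)) f"
    unfolding strong_rainbow_coloring_def using col rb by blast
  thus ?thesis by blast
qed

lemma src_lower: assumes n: "n \<ge> 2" and c: "strong_rainbow_coloring (V2 n) (E2 n) K f"
  shows "n \<le> K * K"
proof -
  let ?L = "{2..<n+2}"
  define \<phi> where "\<phi> = (\<lambda>x::nat. (f {0,x}, f {1,x}))"
  have img: "\<phi> ` ?L \<subseteq> {1..K} \<times> {1..K}"
  proof
    fix p assume "p \<in> \<phi> ` ?L"
    then obtain x where x: "x \<in> ?L" "p = \<phi> x" by blast
    have "{0,x} \<in> E2 n" "{1,x} \<in> E2 n" using x(1) by (simp_all add: E2_mem)
    thus "p \<in> {1..K} \<times> {1..K}" using c x(2) unfolding strong_rainbow_coloring_def \<phi>_def by auto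
  qed
  have inj: "inj_on \<phi> ?L"
  proof (rule inj_onI, rule ccontr)
    fix x y assume x: "x \<in> ?L" and y: "y \<in> ?L" and eq: "\<phi> x = \<phi> y" and ne: "x \<noteq> y"
    have xy: "x \<in> V2 n" "y \<in> V2 n" using x y by (simp_all add: V2_mem)
    obtain P where P: "is_shortest_path (V2 n) (E2 n) x y P" "rainbow f P"
      using c xy ne unfolding strong_rainbow_coloring_def by blast
    have nE: "{x,y} \<notin> E2 n" using x y by (simp add: E2_mem)
    have e0: "{x,0} \<in> E2 n" "{0,y} \<in> E2 n" using x y by (simp_all add: E2_mem)
    have "is_shortest_path (V2 n) (E2 n) x y [x,0,y]"
      using xy x y ne nE e0 by (intro shortest3) (simp_all add: V2_mem)
    hence "length P \<le> 3" using P(1) unfolding is_shortest_path_def by fastforce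
    moreover have p: "is_uv_path (V2 n) (E2 n) x y P" using P(1) by (simp add: is_shortest_path_def)
    moreover have "length P \<ge> 3" using len_ge3[OF p ne nE] .
    ultimately have "length P = 3" by simp
    then obtain w where w: "P = [x,w,y]" "{x,w} \<in> E2 n" "{w,y} \<in> E2 n" using path_len3[OF p] by blast
    have "w < 2" using w(2) x by (auto simp: E2_mem)
    hence "w = 0 \<or> w = 1" by auto
    moreover have "f {x,w} \<noteq> f {w,y}" using P(2) w(1) by (simp add: rainbow_def pe3)
    ultimately show False using eq unfolding \<phi>_def by (auto simp: insert_commute)
  qed
  have "card ?L \<le> card ({1..K} \<times> {1..K})"
    using card_inj_on_le[OF inj img] by simp
  thus ?thesis by (simp add: card_cartesian_product)
qed


theorem proposition3:
  fixes k :: nat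
  shows "\<exists>(V :: nat set) (E :: nat set set).
           simple_graph V E \<and> connected_graph V E \<and> E \<noteq> {} \<and>
           int (src V E) - int (max (diam V E) (omega' V E)) \<ge> int k"
proof -
  define n where "n = (k+2)*(k+2)"
  have n: "n \<ge> 2" unfolding n_def by (metis le_add2 le_square order_trans)
  have ex: "\<exists>K f. strong_rainbow_coloring (V2 n) (E2 n) K f" using coloring_exists[OF n] .
  have "\<exists>f. strong_rainbow_coloring (V2 n) (E2 n) (src (V2 n) (E2 n)) f"
    unfolding src_def using LeastI_ex[OF ex] .
  then obtain g where "strong_rainbow_coloring (V2 n) (E2 n) (src (V2 n) (E2 n)) g" by blast
  from src_lower[OF n this] have "(k+2)*(k+2) \<le> src (V2 n) (E2 n) * src (V2 n) (E2 n)"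
    unfolding n_def .
  hence s: "k + 2 \<le> src (V2 n) (E2 n)"
  proof (rule contrapos_pp)
    let ?s = "src (V2 n) (E2 n)"
    assume "\<not> k + 2 \<le> ?s"
    hence a: "?s \<le> k + 1" by simp
    have "?s * ?s \<le> (k+1) * (k+1)" using mult_le_mono[OF a a] .
    also have "(k+1)*(k+1) < (k+2)*(k+2)" by (intro mult_strict_mono) auto
    finally show "\<not> (k+2)*(k+2) \<le> ?s * ?s" by simp
  qed
  have m: "max (diam (V2 n) (E2 n)) (omega' (V2 n) (E2 n)) \<le> 2" using diam2[OF n] omega2[OF n] by simp
  have "int (src (V2 n) (E2 n)) - int (max (diam (V2 n) (E2 n)) (omega' (V2 n) (E2 n))) \<ge> int k"
    using s m by linarith
  thus ?thesis using simple2 connected2[OF n] E2_ne[OF n] by blast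
qed

end
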